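(* Let $\pi$ be a positive continuous probability density on $\mathbb{R}$ and $q:\mathbb{R}^2\to[0,\infty)$ a bounded continuous function with $q(x,\cdot)$ a probability density for each $x$ and, for some $s>0$, $q(x,x+u)=0$ whenever $|u|>s$. Let $a>0$. Then the operators $T_a$, $T_{a^c}R_a$ and $(R_{a^c}+T_{a^c})^nR_a$ for every $n\ge1$ are compact on $L^2(\pi)$.
   Context: $L^2(\pi)$ is the $L^2$ space of the probability measure $\pi(y)dy$. Set $t(x,y):=\min(q(x,y),\pi(y)q(y,x)/\pi(x))$, $r(x):=1-\int_{\mathbb{R}}t(x,y)\,dy$, $(Tf)(x):=\int_{\mathbb{R}}f(y)t(x,y)\,dy$ and $(Rf)(x):=r(x)f(x)$. For a bounded operator $U$ on $L^2(\pi)$ define $U_af:=1_{[-a,a]}\cdot Uf$ and $U_{a^c}f:=1_{\mathbb{R}\setminus[-a,a]}\cdot Uf$. *)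

theory Defs
  imports "HOL-Analysis.Analysis"
begin

definition pimeas :: "(real \<Rightarrow> real) \<Rightarrow> real measure" where
  "pimeas \<pi> = density lborel (\<lambda>y. ennreal (\<pi> y))"

definition L2 :: "(real \<Rightarrow> real) \<Rightarrow> (real \<Rightarrow> real) \<Rightarrow> bool" where
  "L2 \<pi> f \<longleftrightarrow> f \<in> borel_measurable borel \<and> integrable (pimeas \<pi>) (\<lambda>x. (f x)\<^sup>2)"

definition L2norm :: "(real \<Rightarrow> real) \<Rightarrow> (real \<Rightarrow> real) \<Rightarrow> real" where
  "L2norm \<pi> f = sqrt (integral\<^sup>L (pimeas \<pi>) (\<lambda>x. (f x)\<^sup>2))"

text \<open>Compact operator on L2(pi): it maps L2(pi) into L2(pi) and maps every
  norm-bounded sequence to a sequence having an L2-Cauchy (hence, by completeness,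
  L2-convergent) subsequence, i.e. the image of the unit ball is relatively compact.\<close>

definition compact_op :: "(real \<Rightarrow> real) \<Rightarrow> ((real \<Rightarrow> real) \<Rightarrow> (real \<Rightarrow> real)) \<Rightarrow> bool" where
  "compact_op \<pi> U \<longleftrightarrow>
     (\<forall>f. L2 \<pi> f \<longrightarrow> L2 \<pi> (U f)) \<and>
     (\<forall>fs :: nat \<Rightarrow> real \<Rightarrow> real. (\<forall>n. L2 \<pi> (fs n)) \<and> (\<exists>B. \<forall>n. L2norm \<pi> (fs n) \<le> B) \<longrightarrow>
        (\<exists>r :: nat \<Rightarrow> nat. strict_mono r \<and>
           (\<forall>e>0. \<exists>N. \<forall>m\<ge>N. \<forall>n\<ge>N.
               L2norm \<pi> (\<lambda>x. U (fs (r m)) x - U (fs (r n)) x) < e)))"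

definition tker :: "(real \<Rightarrow> real) \<Rightarrow> (real \<Rightarrow> real \<Rightarrow> real) \<Rightarrow> real \<Rightarrow> real \<Rightarrow> real" where
  "tker \<pi> q x y = min (q x y) (\<pi> y * q y x / \<pi> x)"

definition rfun :: "(real \<Rightarrow> real) \<Rightarrow> (real \<Rightarrow> real \<Rightarrow> real) \<Rightarrow> real \<Rightarrow> real" where
  "rfun \<pi> q x = 1 - (\<integral>y. tker \<pi> q x y \<partial>lborel)"

definition Top :: "(real \<Rightarrow> real) \<Rightarrow> (real \<Rightarrow> real \<Rightarrow> real) \<Rightarrow> (real \<Rightarrow> real) \<Rightarrow> real \<Rightarrow> real" where
  "Top \<pi> q f x = (\<integral>y. f y * tker \<pi> q x y \<partial>lborel)"

definition Rop :: "(real \<Rightarrow> real) \<Rightarrow> (real \<Rightarrow> real \<Rightarrow> real) \<Rightarrow> (real \<Rightarrow> real) \<Rightarrow> real \<Rightarrow> real" where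
  "Rop \<pi> q f x = rfun \<pi> q x * f x"

definition restr_in :: "real \<Rightarrow> ((real \<Rightarrow> real) \<Rightarrow> (real \<Rightarrow> real)) \<Rightarrow> (real \<Rightarrow> real) \<Rightarrow> real \<Rightarrow> real" where
  "restr_in a U f x = indicator {-a..a} x * U f x"

definition restr_out :: "real \<Rightarrow> ((real \<Rightarrow> real) \<Rightarrow> (real \<Rightarrow> real)) \<Rightarrow> (real \<Rightarrow> real) \<Rightarrow> real \<Rightarrow> real" where
  "restr_out a U f x = indicator (UNIV - {-a..a}) x * U f x"

end

theory Submission imports Defs "HOL-Complex_Analysis.Great_Picard" begin

lemma sq_le: "\<bar>u::real\<bar> \<le> C \<Longrightarrow> u\<^sup>2 \<le> C\<^sup>2"
  by (metis abs_ge_zero power2_abs power_mono)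

lemma meas_param:
  fixes g :: "real \<Rightarrow> real \<Rightarrow> real"
  assumes "(\<lambda>z. g (fst z) (snd z)) \<in> borel_measurable borel"
  shows "(\<lambda>x. \<integral>y. g x y \<partial>lborel) \<in> borel_measurable borel"
proof -
  have "case_prod g \<in> borel_measurable (borel \<Otimes>\<^sub>M lborel)"
  proof -
    have "sets (borel \<Otimes>\<^sub>M lborel) = sets (borel \<Otimes>\<^sub>M (borel::real measure))"
      by (rule sets_pair_measure_cong) (auto simp: sets_lborel)
    also have "\<dots> = sets (borel :: (real \<times> real) measure)" by (rule arg_cong[where f=sets, OF borel_prod])
    finally have e: "sets (borel \<Otimes>\<^sub>M lborel) = sets (borel :: (real \<times> real) measure)" .
    show ?thesis using assms
      by (subst measurable_cong_sets[OF e refl]) (simp add: case_prod_beta')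
  qed
  then show ?thesis by (rule lborel.borel_measurable_lebesgue_integral)
qed

locale pisetup =
  fixes \<pi> :: "real \<Rightarrow> real" and q :: "real \<Rightarrow> real \<Rightarrow> real" and s Q :: real
  assumes pi_pos: "\<And>x. \<pi> x > 0"
    and pi_cont: "continuous_on UNIV \<pi>"
    and pi_int: "integrable lborel \<pi>"
    and pi_one: "(\<integral>y. \<pi> y \<partial>lborel) = 1"
    and q_nonneg: "\<And>x y. q x y \<ge> 0"
    and q_bdd: "\<And>x y. q x y \<le> Q"
    and q_cont: "continuous_on UNIV (\<lambda>(x, y). q x y)"
    and q_int: "\<And>x. integrable lborel (q x)"
    and q_one: "\<And>x. (\<integral>y. q x y \<partial>lborel) = 1"
    and s_pos: "s > 0"
    and q_supp: "\<And>x u. \<bar>u\<bar> > s \<Longrightarrow> q x (x + u) = 0"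
begin

abbreviation "t \<equiv> tker \<pi> q"

lemma Q_nonneg: "Q \<ge> 0" using q_nonneg[of 0 0] q_bdd[of 0 0] by linarith

lemma t_nonneg: "t x y \<ge> 0"
  unfolding tker_def using q_nonneg[of x y] q_nonneg[of y x] pi_pos[of x] pi_pos[of y] by simp

lemma t_le_q: "t x y \<le> q x y" unfolding tker_def by simp

lemma t_le_Q: "t x y \<le> Q" using t_le_q q_bdd order_trans by blast

lemma t_zero: "\<bar>x - y\<bar> > s \<Longrightarrow> t x y = 0"
  using q_supp[of "y - x" x] t_nonneg[of x y] t_le_q[of x y] by simp

lemma pi_meas: "\<pi> \<in> borel_measurable borel"
  using pi_cont by (rule borel_measurable_continuous_onI)

lemma t_cont: "continuous_on UNIV (\<lambda>z. t (fst z) (snd z))"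
proof -
  have c1: "continuous_on UNIV (\<lambda>z::real\<times>real. q (fst z) (snd z))"
    using q_cont by (simp add: case_prod_beta')
  have sw: "continuous_on UNIV (\<lambda>z::real\<times>real. (snd z, fst z))"
    by (intro continuous_intros)
  have c2: "continuous_on UNIV (\<lambda>z::real\<times>real. q (snd z) (fst z))"
    using continuous_on_compose2[OF c1 sw] by simp
  have c3: "continuous_on UNIV (\<lambda>z::real\<times>real. \<pi> (snd z))"
    by (rule continuous_on_compose2[OF pi_cont]) (auto intro!: continuous_intros)
  have c4: "continuous_on UNIV (\<lambda>z::real\<times>real. \<pi> (fst z))"
    by (rule continuous_on_compose2[OF pi_cont]) (auto intro!: continuous_intros)
  show ?thesis unfolding tker_def
    using pi_pos by (intro continuous_intros c1 c2 c3 c4) (auto simp: less_imp_neq[symmetric])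
qed

lemma t_meas2: "(\<lambda>z. t (fst z) (snd z)) \<in> borel_measurable borel"
  using t_cont by (rule borel_measurable_continuous_onI)

lemma t_meas: "t x \<in> borel_measurable borel"
proof -
  have "continuous_on UNIV (t x)"
    by (rule continuous_on_compose2[OF t_cont, of _ "\<lambda>y. (x, y)", simplified]) (auto intro!: continuous_intros)
  then show ?thesis by (rule borel_measurable_continuous_onI)
qed

lemma t_int: "integrable lborel (t x)"
  by (rule Bochner_Integration.integrable_bound[OF q_int[of x]]) (use t_meas t_nonneg t_le_q q_nonneg in auto)

lemma t_intle: "(\<integral>y. t x y \<partial>lborel) \<le> 1"
  using integral_mono[OF t_int q_int t_le_q] q_one by simp

lemma t_intge: "(\<integral>y. t x y \<partial>lborel) \<ge> 0"
  using t_nonneg by simp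

lemma r_ge: "rfun \<pi> q x \<ge> 0" unfolding rfun_def using t_intle by simp
lemma r_le: "rfun \<pi> q x \<le> 1" unfolding rfun_def using t_intge by simp

lemma r_meas: "rfun \<pi> q \<in> borel_measurable borel"
proof -
  have "(\<lambda>x. \<integral>y. t x y \<partial>lborel) \<in> borel_measurable borel"
    by (rule meas_param) (rule t_meas2)
  then show ?thesis unfolding rfun_def[abs_def] by measurable
qed

lemma Top_meas: "f \<in> borel_measurable borel \<Longrightarrow> Top \<pi> q f \<in> borel_measurable borel"
proof -
  assume f: "f \<in> borel_measurable borel"
  have sn: "(snd :: real \<times> real \<Rightarrow> real) \<in> borel_measurable borel"
    by (intro borel_measurable_continuous_onI continuous_intros)
  have "(\<lambda>z::real\<times>real. f (snd z)) \<in> borel_measurable borel"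
    using measurable_compose[OF sn f] .
  then have "(\<lambda>z::real\<times>real. f (snd z) * t (fst z) (snd z)) \<in> borel_measurable borel"
    using t_meas2 by (rule borel_measurable_times)
  then show ?thesis unfolding Top_def[abs_def] by (rule meas_param)
qed

definition "Nf (f::real\<Rightarrow>real) = integral\<^sup>L (pimeas \<pi>) (\<lambda>x. (f x)\<^sup>2)"

lemma lb_meas: "f \<in> borel_measurable lborel \<longleftrightarrow> f \<in> borel_measurable borel"
  by (simp add: measurable_cong_sets[OF sets_lborel refl])

lemma pm_sets: "sets (pimeas \<pi>) = sets borel"
  by (simp add: pimeas_def sets_lborel)

lemma pm_meas: "f \<in> borel_measurable (pimeas \<pi>) \<longleftrightarrow> f \<in> borel_measurable borel"
  by (simp add: measurable_cong_sets[OF pm_sets refl])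

lemma pm_int: "(f::real\<Rightarrow>real) \<in> borel_measurable borel \<Longrightarrow> integral\<^sup>L (pimeas \<pi>) f = (\<integral>y. \<pi> y * f y \<partial>lborel)"
  unfolding pimeas_def using pi_meas pi_pos
  by (subst integral_density) (auto simp: lb_meas less_imp_le)

lemma pm_integrable: "(f::real\<Rightarrow>real) \<in> borel_measurable borel \<Longrightarrow> integrable (pimeas \<pi>) f \<longleftrightarrow> integrable lborel (\<lambda>y. \<pi> y * f y)"
  unfolding pimeas_def using pi_meas pi_pos
  by (subst integrable_density) (auto simp: lb_meas less_imp_le)

lemma pm_emeas: "emeasure (pimeas \<pi>) (space (pimeas \<pi>)) = 1"
proof -
  have "emeasure (pimeas \<pi>) (space (pimeas \<pi>)) = (\<integral>\<^sup>+y. ennreal (\<pi> y) \<partial>lborel)"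
    unfolding pimeas_def using pi_meas
    by (subst emeasure_density) (auto simp: lb_meas)
  also have "\<dots> = ennreal (\<integral>y. \<pi> y \<partial>lborel)"
    using pi_int pi_pos by (subst nn_integral_eq_integral) (auto simp: less_imp_le)
  finally show ?thesis using pi_one by simp
qed

lemma pm_fin: "finite_measure (pimeas \<pi>)"
  using pm_emeas by (intro finite_measureI) simp

lemma pm_measure: "measure (pimeas \<pi>) (space (pimeas \<pi>)) = 1"
  using pm_emeas by (simp add: measure_def)

lemma BM_L2:
  assumes f: "f \<in> borel_measurable borel" and C: "\<And>x. \<bar>f x\<bar> \<le> C"
  shows "L2 \<pi> f"
proof -
  interpret finite_measure "pimeas \<pi>" by (rule pm_fin)
  have "(\<lambda>x. (f x)\<^sup>2) \<in> borel_measurable borel" using f by measurable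
  moreover have "norm ((f x)\<^sup>2) \<le> C\<^sup>2" for x
    using sq_le[OF C[of x]] by simp
  ultimately have "integrable (pimeas \<pi>) (\<lambda>x. (f x)\<^sup>2)"
    by (intro integrable_const_bound[where B="C\<^sup>2"]) (auto simp: pm_meas)
  then show ?thesis using f by (simp add: L2_def)
qed

lemma L2norm_le:
  assumes f: "f \<in> borel_measurable borel" and C: "\<And>x. \<bar>f x\<bar> \<le> C"
  shows "L2norm \<pi> f \<le> C"
proof -
  interpret finite_measure "pimeas \<pi>" by (rule pm_fin)
  have C0: "C \<ge> 0" using C[of 0] by linarith
  have i: "integrable (pimeas \<pi>) (\<lambda>x. (f x)\<^sup>2)" using BM_L2[OF f C] by (simp add: L2_def)
  have "integral\<^sup>L (pimeas \<pi>) (\<lambda>x. (f x)\<^sup>2) \<le> integral\<^sup>L (pimeas \<pi>) (\<lambda>x. C\<^sup>2)"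
    using C by (intro integral_mono i) (auto intro: sq_le)
  also have "\<dots> = C\<^sup>2" by (simp add: pm_measure)
  finally show ?thesis unfolding L2norm_def using C0 real_sqrt_le_mono by fastforce
qed

lemma Nf_nonneg: "Nf f \<ge> 0" unfolding Nf_def by (rule Bochner_Integration.integral_nonneg) simp

lemma Nf_le: "L2norm \<pi> f \<le> B \<Longrightarrow> Nf f \<le> B\<^sup>2"
proof -
  assume "L2norm \<pi> f \<le> B"
  then have "sqrt (Nf f) \<le> B" by (simp add: L2norm_def Nf_def)
  then have "(sqrt (Nf f))\<^sup>2 \<le> B\<^sup>2" using Nf_nonneg[of f] by (intro power_mono) auto
  then show ?thesis using Nf_nonneg by simp
qed

lemma L1_bound:
  assumes "L2 \<pi> f"
  shows "integrable lborel (\<lambda>y. \<pi> y * \<bar>f y\<bar>)" "(\<integral>y. \<pi> y * \<bar>f y\<bar> \<partial>lborel) \<le> (1 + Nf f) / 2"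
proof -
  have f: "f \<in> borel_measurable borel" using assms by (simp add: L2_def)
  have f2: "(\<lambda>x. (f x)\<^sup>2) \<in> borel_measurable borel" using f by measurable
  have i2: "integrable lborel (\<lambda>y. \<pi> y * (f y)\<^sup>2)"
    using assms f2 by (simp add: L2_def pm_integrable)
  have N: "Nf f = (\<integral>y. \<pi> y * (f y)\<^sup>2 \<partial>lborel)" unfolding Nf_def using f2 by (rule pm_int)
  have ib: "integrable lborel (\<lambda>y. (\<pi> y + \<pi> y * (f y)\<^sup>2) / 2)"
    using pi_int i2 by auto
  have pw: "\<pi> y * \<bar>f y\<bar> \<le> (\<pi> y + \<pi> y * (f y)\<^sup>2) / 2" for y
  proof -
    have "0 \<le> (\<bar>f y\<bar> - 1)\<^sup>2" by simp
    then have "2 * \<bar>f y\<bar> \<le> 1 + (f y)\<^sup>2" by (simp add: power2_eq_square algebra_simps)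
    then have "\<pi> y * (2 * \<bar>f y\<bar>) \<le> \<pi> y * (1 + (f y)\<^sup>2)"
      using pi_pos[of y] by (intro mult_left_mono) auto
    then show ?thesis by (simp add: algebra_simps)
  qed
  have nb: "norm (\<pi> y * \<bar>f y\<bar>) \<le> norm ((\<pi> y + \<pi> y * (f y)\<^sup>2) / 2)" for y
  proof -
    have "0 \<le> \<pi> y * \<bar>f y\<bar>" using pi_pos[of y] by simp
    moreover have "0 \<le> \<pi> y * (f y)\<^sup>2" using pi_pos[of y] by simp
    ultimately show ?thesis using pw[of y] pi_pos[of y] by simp
  qed
  show i1: "integrable lborel (\<lambda>y. \<pi> y * \<bar>f y\<bar>)"
    by (rule Bochner_Integration.integrable_bound[OF ib])
       (use f pi_meas nb in \<open>auto simp: lb_meas intro!: AE_I2\<close>)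
  have "(\<integral>y. \<pi> y * \<bar>f y\<bar> \<partial>lborel) \<le> (\<integral>y. (\<pi> y + \<pi> y * (f y)\<^sup>2) / 2 \<partial>lborel)"
    by (intro integral_mono i1 ib pw)
  also have "\<dots> = (1 + Nf f) / 2" using pi_int i2 pi_one N by simp
  finally show "(\<integral>y. \<pi> y * \<bar>f y\<bar> \<partial>lborel) \<le> (1 + Nf f) / 2" .
qed

lemma pi_min: "\<exists>m>0. \<forall>y. \<bar>y\<bar> \<le> c \<longrightarrow> m \<le> \<pi> y" if "c \<ge> 0"
proof -
  have "compact {-c..c}" by simp
  moreover have "{-c..c} \<noteq> {}" using that by simp
  moreover have "continuous_on {-c..c} \<pi>" using pi_cont continuous_on_subset by blast
  ultimately obtain y0 where "y0 \<in> {-c..c}" "\<forall>y\<in>{-c..c}. \<pi> y0 \<le> \<pi> y"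
    using continuous_attains_inf by blast
  then show ?thesis using pi_pos[of y0] by (intro exI[of _ "\<pi> y0"]) (auto simp: abs_le_iff)
qed

lemma pw_bound:
  assumes m: "m > 0" "\<forall>y. \<bar>y\<bar> \<le> b + s \<longrightarrow> m \<le> \<pi> y" and x: "\<bar>x\<bar> \<le> b"
  shows "\<bar>f y * t x y\<bar> \<le> Q / m * (\<pi> y * \<bar>f y\<bar>)"
proof (cases "\<bar>y\<bar> \<le> b + s")
  case True
  have "\<bar>f y * t x y\<bar> = \<bar>f y\<bar> * t x y" using t_nonneg by (simp add: abs_mult)
  also have "\<dots> \<le> \<bar>f y\<bar> * Q" using t_le_Q by (intro mult_left_mono) auto
  also have "\<dots> \<le> (\<pi> y / m * \<bar>f y\<bar>) * Q"
  proof -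
    have "m * \<bar>f y\<bar> \<le> \<pi> y * \<bar>f y\<bar>" using True m by (intro mult_right_mono) auto
    then have "\<bar>f y\<bar> \<le> \<pi> y / m * \<bar>f y\<bar>" using m by (simp add: field_simps)
    then show ?thesis using Q_nonneg by (intro mult_right_mono) auto
  qed
  finally show ?thesis by (simp add: algebra_simps)
next
  case False
  then have "\<bar>x - y\<bar> > s" using x by linarith
  then show ?thesis using t_zero Q_nonneg m pi_pos[of y] by simp
qed

lemma Top_int_m:
  assumes L: "L2 \<pi> f" and m: "m > 0" "\<forall>y. \<bar>y\<bar> \<le> b + s \<longrightarrow> m \<le> \<pi> y" and x: "\<bar>x\<bar> \<le> b"
  shows "integrable lborel (\<lambda>y. f y * t x y)"
proof -
  have f: "f \<in> borel_measurable borel" using L by (simp add: L2_def)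
  have i: "integrable lborel (\<lambda>y. Q / m * (\<pi> y * \<bar>f y\<bar>))" using L1_bound(1)[OF L] by simp
  have nb: "norm (f y * t x y) \<le> norm (Q / m * (\<pi> y * \<bar>f y\<bar>))" for y
    using pw_bound[OF m x, of f y] m Q_nonneg pi_pos[of y] by simp
  show ?thesis
    by (rule Bochner_Integration.integrable_bound[OF i]) (use f t_meas nb in \<open>auto simp: lb_meas\<close>)
qed

lemma Top_int:
  assumes L: "L2 \<pi> f"
  shows "integrable lborel (\<lambda>y. f y * t x y)"
proof -
  obtain m where m: "m > 0" "\<forall>y. \<bar>y\<bar> \<le> \<bar>x\<bar> + s \<longrightarrow> m \<le> \<pi> y"
    using pi_min[of "\<bar>x\<bar> + s"] s_pos by auto
  show ?thesis by (rule Top_int_m[OF L m]) simp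
qed

lemma Top_bound:
  assumes L: "L2 \<pi> f" and m: "m > 0" "\<forall>y. \<bar>y\<bar> \<le> b + s \<longrightarrow> m \<le> \<pi> y" and x: "\<bar>x\<bar> \<le> b"
  shows "\<bar>Top \<pi> q f x\<bar> \<le> Q / m * ((1 + Nf f) / 2)"
proof -
  have i: "integrable lborel (\<lambda>y. Q / m * (\<pi> y * \<bar>f y\<bar>))" using L1_bound(1)[OF L] by simp
  have "\<bar>Top \<pi> q f x\<bar> \<le> (\<integral>y. \<bar>f y * t x y\<bar> \<partial>lborel)"
    unfolding Top_def using integral_abs_bound by (simp)
  also have "\<dots> \<le> (\<integral>y. Q / m * (\<pi> y * \<bar>f y\<bar>) \<partial>lborel)"
    by (intro integral_mono i pw_bound[OF m x] integrable_abs Top_int_m[OF L m x])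
  also have "\<dots> = Q / m * (\<integral>y. \<pi> y * \<bar>f y\<bar> \<partial>lborel)" by simp
  also have "\<dots> \<le> Q / m * ((1 + Nf f) / 2)"
    using L1_bound(2)[OF L] Q_nonneg m by (intro mult_left_mono) auto
  finally show ?thesis .
qed

lemma Top_diff:
  assumes L: "L2 \<pi> f" and m: "m > 0" "\<forall>y. \<bar>y\<bar> \<le> b + s \<longrightarrow> m \<le> \<pi> y"
    and x: "\<bar>x\<bar> \<le> b" and x': "\<bar>x'\<bar> \<le> b"
    and e: "e \<ge> 0" "\<forall>y. \<bar>y\<bar> \<le> b + s \<longrightarrow> \<bar>t x y - t x' y\<bar> \<le> e"
  shows "\<bar>Top \<pi> q f x - Top \<pi> q f x'\<bar> \<le> e / m * ((1 + Nf f) / 2)"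
proof -
  have i: "integrable lborel (\<lambda>y. e / m * (\<pi> y * \<bar>f y\<bar>))" using L1_bound(1)[OF L] by simp
  have i1: "integrable lborel (\<lambda>y. f y * t x y)" by (rule Top_int_m[OF L m x])
  have i2: "integrable lborel (\<lambda>y. f y * t x' y)" by (rule Top_int_m[OF L m x'])
  have pw: "\<bar>f y * t x y - f y * t x' y\<bar> \<le> e / m * (\<pi> y * \<bar>f y\<bar>)" for y
  proof (cases "\<bar>y\<bar> \<le> b + s")
    case True
    have "\<bar>f y * t x y - f y * t x' y\<bar> = \<bar>f y\<bar> * \<bar>t x y - t x' y\<bar>"
      by (simp add: abs_mult[symmetric] right_diff_distrib)
    also have "\<dots> \<le> \<bar>f y\<bar> * e" using e True by (intro mult_left_mono) auto
    also have "\<dots> \<le> (\<pi> y / m * \<bar>f y\<bar>) * e"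
    proof -
      have "m * \<bar>f y\<bar> \<le> \<pi> y * \<bar>f y\<bar>" using True m by (intro mult_right_mono) auto
      then have "\<bar>f y\<bar> \<le> \<pi> y / m * \<bar>f y\<bar>" using m by (simp add: field_simps)
      then show ?thesis using e by (intro mult_right_mono) auto
    qed
    finally show ?thesis by (simp add: algebra_simps)
  next
    case False
    then have "\<bar>x - y\<bar> > s" "\<bar>x' - y\<bar> > s" using x x' by linarith+
    then show ?thesis using t_zero e m pi_pos[of y] by simp
  qed
  have "\<bar>Top \<pi> q f x - Top \<pi> q f x'\<bar> = \<bar>\<integral>y. f y * t x y - f y * t x' y \<partial>lborel\<bar>"
    unfolding Top_def using i1 i2 by simp
  also have "\<dots> \<le> (\<integral>y. \<bar>f y * t x y - f y * t x' y\<bar> \<partial>lborel)"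
    using integral_abs_bound by simp
  also have "\<dots> \<le> (\<integral>y. e / m * (\<pi> y * \<bar>f y\<bar>) \<partial>lborel)"
    by (intro integral_mono i pw integrable_abs Bochner_Integration.integrable_diff i1 i2)
  also have "\<dots> = e / m * (\<integral>y. \<pi> y * \<bar>f y\<bar> \<partial>lborel)" by simp
  also have "\<dots> \<le> e / m * ((1 + Nf f) / 2)"
    using L1_bound(2)[OF L] e m by (intro mult_left_mono) auto
  finally show ?thesis .
qed

lemma key:
  assumes L: "\<And>n. L2 \<pi> (fs n)" and M: "\<And>n. Nf (fs n) \<le> M" and b: "b \<ge> 0"
  shows "\<exists>k. strict_mono (k::nat\<Rightarrow>nat) \<and> (\<forall>e>0. \<exists>N. \<forall>m\<ge>N. \<forall>n\<ge>N. \<forall>x. \<bar>x\<bar> \<le> b \<longrightarrow>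
            \<bar>Top \<pi> q (fs (k m)) x - Top \<pi> q (fs (k n)) x\<bar> < e)"
proof -
  obtain m where m: "m > 0" "\<forall>y. \<bar>y\<bar> \<le> b + s \<longrightarrow> m \<le> \<pi> y"
    using pi_min[of "b + s"] s_pos b by auto
  have M0: "M \<ge> 0" using M[of 0] Nf_nonneg[of "fs 0"] by linarith
  define K where "K = (1 + M) / 2 / m"
  have K0: "K > 0" unfolding K_def using M0 m by simp
  define A where "A = {-b..b} \<times> {-(b+s)..b+s}"
  have "compact A" unfolding A_def by (intro compact_Times) auto
  moreover have "continuous_on A (\<lambda>z. t (fst z) (snd z))"
    using t_cont continuous_on_subset by blast
  ultimately have uc: "uniformly_continuous_on A (\<lambda>z. t (fst z) (snd z))"
    by (rule compact_uniformly_continuous[rotated])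
  obtain g k where k: "strict_mono (k :: nat \<Rightarrow> nat)"
    and conv: "\<And>e. 0 < e \<Longrightarrow> \<exists>N. \<forall>n x. n \<ge> N \<and> x \<in> {-b..b} \<longrightarrow> norm (Top \<pi> q (fs (k n)) x - g x) < e"
  proof (rule Arzela_Ascoli[of "{-b..b}" "\<lambda>n x. Top \<pi> q (fs n) x" "Q / m * ((1 + M) / 2)"])
    show "compact {-b..b::real}" by simp
    show "norm (Top \<pi> q (fs n) x) \<le> Q / m * ((1 + M) / 2)" if "x \<in> {-b..b}" for n x
    proof -
      have "\<bar>Top \<pi> q (fs n) x\<bar> \<le> Q / m * ((1 + Nf (fs n)) / 2)"
        using that by (intro Top_bound[OF L m]) auto
      also have "\<dots> \<le> Q / m * ((1 + M) / 2)"
        using M[of n] m Q_nonneg by (intro mult_left_mono) auto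
      finally show ?thesis by simp
    qed
    show "\<exists>d>0. \<forall>n y. y \<in> {-b..b} \<and> norm (x - y) < d \<longrightarrow>
            norm (Top \<pi> q (fs n) x - Top \<pi> q (fs n) y) < e" if x: "x \<in> {-b..b}" and e: "0 < e" for x e
    proof -
      define e' where "e' = e / (2 * K)"
      have e': "e' > 0" unfolding e'_def using e K0 by simp
      obtain d where d: "d > 0" and dd: "\<And>z z'. z \<in> A \<Longrightarrow> z' \<in> A \<Longrightarrow> dist z' z < d \<Longrightarrow>
          dist (t (fst z') (snd z')) (t (fst z) (snd z)) < e'"
        using uc e' unfolding uniformly_continuous_on_def by metis
      show ?thesis
      proof (intro exI[of _ d] conjI allI impI d)
        fix n y assume y: "y \<in> {-b..b} \<and> norm (x - y) < d"
        have tb: "\<forall>w. \<bar>w\<bar> \<le> b + s \<longrightarrow> \<bar>t x w - t y w\<bar> \<le> e'"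
        proof (intro allI impI)
          fix w assume w: "\<bar>w\<bar> \<le> b + s"
          have "(x, w) \<in> A" "(y, w) \<in> A" using x y w unfolding A_def by (auto simp: abs_le_iff)
          moreover have "dist (y, w) (x, w) < d" using y by (simp add: dist_Pair_Pair dist_norm abs_minus_commute)
          ultimately have "dist (t y w) (t x w) < e'" using dd by fastforce
          then show "\<bar>t x w - t y w\<bar> \<le> e'" by (simp add: dist_real_def abs_minus_commute)
        qed
        have "\<bar>Top \<pi> q (fs n) x - Top \<pi> q (fs n) y\<bar> \<le> e' / m * ((1 + Nf (fs n)) / 2)"
          using x y by (intro Top_diff[OF L m _ _ _ tb]) (auto simp: less_imp_le[OF e'])
        also have "\<dots> \<le> e' / m * ((1 + M) / 2)"
          using M[of n] m e' by (intro mult_left_mono) auto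
        also have "\<dots> = e' * K" unfolding K_def by simp
        also have "\<dots> < e" unfolding e'_def using K0 e by (simp add: field_simps)
        finally show "norm (Top \<pi> q (fs n) x - Top \<pi> q (fs n) y) < e" by simp
      qed
    qed
  qed blast
  show ?thesis
  proof (intro exI[of _ k] conjI k allI impI)
    fix e :: real assume e: "e > 0"
    obtain N where N: "\<forall>n x. n \<ge> N \<and> x \<in> {-b..b} \<longrightarrow> norm (Top \<pi> q (fs (k n)) x - g x) < e/2"
      using conv[of "e/2"] e by auto
    show "\<exists>N. \<forall>m\<ge>N. \<forall>n\<ge>N. \<forall>x. \<bar>x\<bar> \<le> b \<longrightarrow> \<bar>Top \<pi> q (fs (k m)) x - Top \<pi> q (fs (k n)) x\<bar> < e"
    proof (intro exI[of _ N] allI impI)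
      fix m' n x assume h: "N \<le> m'" "N \<le> n" "\<bar>x\<bar> \<le> b"
      then have "x \<in> {-b..b}" by (simp add: abs_le_iff)
      then have "\<bar>Top \<pi> q (fs (k m')) x - g x\<bar> < e/2" "\<bar>Top \<pi> q (fs (k n)) x - g x\<bar> < e/2"
        using N h by auto
      then show "\<bar>Top \<pi> q (fs (k m')) x - Top \<pi> q (fs (k n)) x\<bar> < e" by linarith
    qed
  qed
qed

definition "BMf u \<longleftrightarrow> u \<in> borel_measurable borel \<and> (\<exists>C. \<forall>x. \<bar>(u::real\<Rightarrow>real) x\<bar> \<le> C)"

definition "SCp U \<longleftrightarrow> (\<forall>fs B. (\<forall>n. L2 \<pi> (fs n)) \<and> (\<forall>n. Nf (fs n) \<le> B) \<longrightarrow>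
   (\<exists>k. strict_mono (k::nat\<Rightarrow>nat) \<and> (\<forall>e>0. \<exists>N. \<forall>m\<ge>N. \<forall>n\<ge>N. \<forall>x.
      \<bar>U (fs (k m)) x - U (fs (k n)) x\<bar> < e)))"

lemma compact_from_sup:
  assumes BM: "\<And>f. L2 \<pi> f \<Longrightarrow> BMf (U f)" and SC: "SCp U"
  shows "compact_op \<pi> U"
  unfolding compact_op_def
proof (intro conjI allI impI)
  fix f assume "L2 \<pi> f"
  then have "BMf (U f)" by (rule BM)
  then obtain C where "U f \<in> borel_measurable borel" "\<And>x. \<bar>U f x\<bar> \<le> C" unfolding BMf_def by blast
  then show "L2 \<pi> (U f)" by (rule BM_L2)
next
  fix fs :: "nat \<Rightarrow> real \<Rightarrow> real"
  assume h: "(\<forall>n. L2 \<pi> (fs n)) \<and> (\<exists>B. \<forall>n. L2norm \<pi> (fs n) \<le> B)"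
  then obtain B where B: "\<And>n. L2norm \<pi> (fs n) \<le> B" by auto
  have hL: "\<And>n. L2 \<pi> (fs n)" using h by simp
  have "(\<forall>n. L2 \<pi> (fs n)) \<and> (\<forall>n. Nf (fs n) \<le> B\<^sup>2)" using hL B Nf_le by simp
  from SC[unfolded SCp_def, rule_format, OF this]
  obtain k where k: "strict_mono (k::nat\<Rightarrow>nat)" and c: "\<forall>e>0. \<exists>N. \<forall>m\<ge>N. \<forall>n\<ge>N. \<forall>x.
      \<bar>U (fs (k m)) x - U (fs (k n)) x\<bar> < e"
    by blast
  show "\<exists>r. strict_mono (r::nat\<Rightarrow>nat) \<and> (\<forall>e>0. \<exists>N. \<forall>m\<ge>N. \<forall>n\<ge>N. L2norm \<pi> (\<lambda>x. U (fs (r m)) x - U (fs (r n)) x) < e)"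
  proof (intro exI[of _ k] conjI k allI impI)
    fix e :: real assume e: "e > 0"
    then have "e/2 > 0" by simp
    from c[rule_format, OF this] obtain N where N: "\<And>m n x. m \<ge> N \<Longrightarrow> n \<ge> N \<Longrightarrow> \<bar>U (fs (k m)) x - U (fs (k n)) x\<bar> < e/2"
      by blast
    show "\<exists>N. \<forall>m\<ge>N. \<forall>n\<ge>N. L2norm \<pi> (\<lambda>x. U (fs (k m)) x - U (fs (k n)) x) < e"
    proof (intro exI[of _ N] allI impI)
      fix m n assume mn: "N \<le> m" "N \<le> n"
      have "BMf (U (fs (k m)))" "BMf (U (fs (k n)))" using BM hL by auto
      then have "U (fs (k m)) \<in> borel_measurable borel" "U (fs (k n)) \<in> borel_measurable borel"
        unfolding BMf_def by auto
      then have "(\<lambda>x. U (fs (k m)) x - U (fs (k n)) x) \<in> borel_measurable borel"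
        by (rule borel_measurable_diff)
      moreover have "\<And>x. \<bar>U (fs (k m)) x - U (fs (k n)) x\<bar> \<le> e/2"
        using N[OF mn] by (simp add: less_imp_le)
      ultimately have "L2norm \<pi> (\<lambda>x. U (fs (k m)) x - U (fs (k n)) x) \<le> e/2"
        by (rule L2norm_le)
      then show "L2norm \<pi> (\<lambda>x. U (fs (k m)) x - U (fs (k n)) x) < e" using e by linarith
    qed
  qed
qed

lemma ind_meas: "indicator (A::real set) \<in> borel_measurable borel" if "A \<in> sets borel"
  using that by (rule borel_measurable_indicator)

lemma ind1: "\<bar>x::real\<bar> \<le> a \<Longrightarrow> indicator {-a..a} x = (1::real)"
  by (auto simp: indicator_def)
lemma ind0: "\<not> \<bar>x::real\<bar> \<le> a \<Longrightarrow> indicator {-a..a} x = (0::real)"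
  by (auto simp: indicator_def)
lemma indo0: "\<bar>x::real\<bar> \<le> a \<Longrightarrow> indicator (UNIV - {-a..a}) x = (0::real)"
  by (auto simp: indicator_def)
lemma indo1: "\<not> \<bar>x::real\<bar> \<le> a \<Longrightarrow> indicator (UNIV - {-a..a}) x = (1::real)"
  by (auto simp: indicator_def)

lemma part1_BM: "L2 \<pi> f \<Longrightarrow> a > 0 \<Longrightarrow> BMf (restr_in a (Top \<pi> q) f)"
proof -
  assume L: "L2 \<pi> f" and a: "a > 0"
  have f: "f \<in> borel_measurable borel" using L by (simp add: L2_def)
  obtain m where m: "m > 0" "\<forall>y. \<bar>y\<bar> \<le> a + s \<longrightarrow> m \<le> \<pi> y"
    using pi_min[of "a + s"] s_pos a by auto
  have C0: "0 \<le> Q / m * ((1 + Nf f) / 2)" using Q_nonneg m Nf_nonneg[of f] by simp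
  have "\<bar>restr_in a (Top \<pi> q) f x\<bar> \<le> Q / m * ((1 + Nf f) / 2)" for x
  proof (cases "\<bar>x\<bar> \<le> a")
    case True
    then show ?thesis using Top_bound[OF L m, of x] unfolding restr_in_def by (simp add: ind1)
  next
    case False
    then show ?thesis using C0 unfolding restr_in_def by (simp add: ind0)
  qed
  moreover have "restr_in a (Top \<pi> q) f \<in> borel_measurable borel"
    unfolding restr_in_def[abs_def] by (intro borel_measurable_times ind_meas Top_meas f) simp
  ultimately show ?thesis unfolding BMf_def by blast
qed

lemma part1_SC: "a > 0 \<Longrightarrow> SCp (restr_in a (Top \<pi> q))"
  unfolding SCp_def
proof (intro allI impI)
  fix fs :: "nat \<Rightarrow> real \<Rightarrow> real" and B assume a: "a > 0" and h: "(\<forall>n. L2 \<pi> (fs n)) \<and> (\<forall>n. Nf (fs n) \<le> B)"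
  then obtain k where k: "strict_mono (k::nat\<Rightarrow>nat)" and c: "\<forall>e>0. \<exists>N. \<forall>m\<ge>N. \<forall>n\<ge>N. \<forall>x. \<bar>x\<bar> \<le> a \<longrightarrow>
            \<bar>Top \<pi> q (fs (k m)) x - Top \<pi> q (fs (k n)) x\<bar> < e"
    using key[of fs B a] by auto
  show "\<exists>k. strict_mono (k::nat\<Rightarrow>nat) \<and> (\<forall>e>0. \<exists>N. \<forall>m\<ge>N. \<forall>n\<ge>N. \<forall>x.
      \<bar>restr_in a (Top \<pi> q) (fs (k m)) x - restr_in a (Top \<pi> q) (fs (k n)) x\<bar> < e)"
  proof (intro exI[of _ k] conjI k allI impI)
    fix e :: real assume e: "e > 0"
    then obtain N where N: "\<forall>m\<ge>N. \<forall>n\<ge>N. \<forall>x. \<bar>x\<bar> \<le> a \<longrightarrow>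
            \<bar>Top \<pi> q (fs (k m)) x - Top \<pi> q (fs (k n)) x\<bar> < e" using c by blast
    show "\<exists>N. \<forall>m\<ge>N. \<forall>n\<ge>N. \<forall>x. \<bar>restr_in a (Top \<pi> q) (fs (k m)) x - restr_in a (Top \<pi> q) (fs (k n)) x\<bar> < e"
    proof (intro exI[of _ N] allI impI)
      fix m n x assume mn: "N \<le> m" "N \<le> n"
      show "\<bar>restr_in a (Top \<pi> q) (fs (k m)) x - restr_in a (Top \<pi> q) (fs (k n)) x\<bar> < e"
      proof (cases "\<bar>x\<bar> \<le> a")
        case True
        then show ?thesis using N mn unfolding restr_in_def by (simp add: ind1)
      next
        case False
        then show ?thesis using e unfolding restr_in_def by (simp add: ind0)
      qed
    qed
  qed
qed


definition "G a f = restr_in a (Rop \<pi> q) f"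

lemma G_meas: "f \<in> borel_measurable borel \<Longrightarrow> G a f \<in> borel_measurable borel"
  unfolding G_def restr_in_def[abs_def] Rop_def
  by (intro borel_measurable_times ind_meas r_meas) simp_all

lemma G_le: "\<bar>G a f y\<bar> \<le> \<bar>f y\<bar>"
proof (cases "\<bar>y\<bar> \<le> a")
  case True
  then have "\<bar>G a f y\<bar> = rfun \<pi> q y * \<bar>f y\<bar>"
    unfolding G_def restr_in_def Rop_def using r_ge[of y] by (simp add: abs_mult ind1)
  also have "\<dots> \<le> 1 * \<bar>f y\<bar>" using r_le[of y] by (intro mult_right_mono) auto
  finally show ?thesis by simp
next
  case False
  then show ?thesis unfolding G_def restr_in_def by (simp add: ind0)
qed

lemma G_L2:
  assumes L: "L2 \<pi> f"
  shows "L2 \<pi> (G a f)" "Nf (G a f) \<le> Nf f"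
proof -
  have f: "f \<in> borel_measurable borel" using L by (simp add: L2_def)
  have Gm: "G a f \<in> borel_measurable borel" using f by (rule G_meas)
  have Gle2: "(G a f y)\<^sup>2 \<le> (f y)\<^sup>2" for y using sq_le[OF G_le[of a f y]] by simp
  have i: "integrable (pimeas \<pi>) (\<lambda>x. (f x)\<^sup>2)" using L by (simp add: L2_def)
  have G2m: "(\<lambda>x. (G a f x)\<^sup>2) \<in> borel_measurable borel" using Gm by measurable
  have iG: "integrable (pimeas \<pi>) (\<lambda>x. (G a f x)\<^sup>2)"
    by (rule Bochner_Integration.integrable_bound[OF i]) (use G2m Gle2 in \<open>auto simp: pm_meas\<close>)
  show "L2 \<pi> (G a f)" using Gm iG by (simp add: L2_def)
  show "Nf (G a f) \<le> Nf f" unfolding Nf_def by (intro integral_mono i iG Gle2)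
qed

lemma Top_G_zero: "\<bar>x\<bar> > a + s \<Longrightarrow> Top \<pi> q (G a f) x = 0"
proof -
  assume x: "\<bar>x\<bar> > a + s"
  have "G a f y * t x y = 0" for y
  proof (cases "\<bar>y\<bar> \<le> a")
    case True
    then have "\<bar>x - y\<bar> > s" using x by linarith
    then show ?thesis using t_zero by simp
  next
    case False
    then show ?thesis unfolding G_def restr_in_def by (simp add: ind0)
  qed
  then have e: "(\<lambda>y. G a f y * t x y) = (\<lambda>y. 0)" by (intro ext)
  show ?thesis unfolding Top_def e by simp
qed

lemma part2_eq: "(restr_out a (Top \<pi> q) \<circ> restr_in a (Rop \<pi> q)) f = (\<lambda>x. indicator (UNIV - {-a..a}) x * Top \<pi> q (G a f) x)"
  unfolding G_def by (simp add: restr_out_def[abs_def])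

lemma part2_BM: "L2 \<pi> f \<Longrightarrow> a > 0 \<Longrightarrow> BMf ((restr_out a (Top \<pi> q) \<circ> restr_in a (Rop \<pi> q)) f)"
proof -
  assume L: "L2 \<pi> f" and a: "a > 0"
  have L': "L2 \<pi> (G a f)" using G_L2[OF L] by simp
  have f: "G a f \<in> borel_measurable borel" using L' by (simp add: L2_def)
  obtain m where m: "m > 0" "\<forall>y. \<bar>y\<bar> \<le> (a + s) + s \<longrightarrow> m \<le> \<pi> y"
    using pi_min[of "(a + s) + s"] s_pos a by auto
  define C where "C = Q / m * ((1 + Nf (G a f)) / 2)"
  have C0: "0 \<le> C" using Q_nonneg m Nf_nonneg[of "G a f"] by (simp add: C_def)
  have "\<bar>indicator (UNIV - {-a..a}) x * Top \<pi> q (G a f) x\<bar> \<le> C" for x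
  proof (cases "\<bar>x\<bar> \<le> a + s")
    case True
    then have "\<bar>Top \<pi> q (G a f) x\<bar> \<le> C" unfolding C_def by (rule Top_bound[OF L' m])
    moreover have "\<bar>indicator (UNIV - {-a..a}) x :: real\<bar> \<le> 1" by (simp add: indicator_def)
    ultimately have "\<bar>indicator (UNIV - {-a..a}) x\<bar> * \<bar>Top \<pi> q (G a f) x\<bar> \<le> 1 * C"
      using C0 by (intro mult_mono) auto
    then show ?thesis by (simp add: abs_mult)
  next
    case False
    then show ?thesis using Top_G_zero[of a x f] C0 by simp
  qed
  moreover have "(\<lambda>x. indicator (UNIV - {-a..a}) x * Top \<pi> q (G a f) x) \<in> borel_measurable borel"
    by (intro borel_measurable_times ind_meas Top_meas f) simp
  ultimately show ?thesis unfolding BMf_def part2_eq by blast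
qed

lemma part2_SC: "a > 0 \<Longrightarrow> SCp (restr_out a (Top \<pi> q) \<circ> restr_in a (Rop \<pi> q))"
  unfolding SCp_def part2_eq
proof (intro allI impI)
  fix fs :: "nat \<Rightarrow> real \<Rightarrow> real" and B assume a: "a > 0" and h: "(\<forall>n. L2 \<pi> (fs n)) \<and> (\<forall>n. Nf (fs n) \<le> B)"
  have L: "\<And>n. L2 \<pi> (G a (fs n))" using G_L2(1) h by blast
  have NB: "\<And>n. Nf (G a (fs n)) \<le> B" using G_L2(2) h order_trans by blast
  have "a + s \<ge> 0" using a s_pos by simp
  from key[of "\<lambda>n. G a (fs n)" B "a + s", OF L NB this]
  obtain k where k: "strict_mono (k::nat\<Rightarrow>nat)" and c: "\<forall>e>0. \<exists>N. \<forall>m\<ge>N. \<forall>n\<ge>N. \<forall>x. \<bar>x\<bar> \<le> a + s \<longrightarrow>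
            \<bar>Top \<pi> q (G a (fs (k m))) x - Top \<pi> q (G a (fs (k n))) x\<bar> < e"
    by blast
  show "\<exists>k. strict_mono (k::nat\<Rightarrow>nat) \<and> (\<forall>e>0. \<exists>N. \<forall>m\<ge>N. \<forall>n\<ge>N. \<forall>x.
      \<bar>indicator (UNIV - {-a..a}) x * Top \<pi> q (G a (fs (k m))) x - indicator (UNIV - {-a..a}) x * Top \<pi> q (G a (fs (k n))) x\<bar> < e)"
  proof (intro exI[of _ k] conjI k allI impI)
    fix e :: real assume e: "e > 0"
    from c[rule_format, OF e] obtain N where N: "\<And>m n x. m \<ge> N \<Longrightarrow> n \<ge> N \<Longrightarrow> \<bar>x\<bar> \<le> a + s \<Longrightarrow>
            \<bar>Top \<pi> q (G a (fs (k m))) x - Top \<pi> q (G a (fs (k n))) x\<bar> < e" by blast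
    show "\<exists>N. \<forall>m\<ge>N. \<forall>n\<ge>N. \<forall>x. \<bar>indicator (UNIV - {-a..a}) x * Top \<pi> q (G a (fs (k m))) x - indicator (UNIV - {-a..a}) x * Top \<pi> q (G a (fs (k n))) x\<bar> < e"
    proof (intro exI[of _ N] allI impI)
      fix m n x assume mn: "N \<le> m" "N \<le> n"
      show "\<bar>indicator (UNIV - {-a..a}) x * Top \<pi> q (G a (fs (k m))) x - indicator (UNIV - {-a..a}) x * Top \<pi> q (G a (fs (k n))) x\<bar> < e"
      proof (cases "\<bar>x\<bar> \<le> a")
        case True
        then show ?thesis using e by (simp add: indo0)
      next
        case False
        then have eq: "indicator (UNIV - {-a..a}) x = (1::real)" by (rule indo1)
        show ?thesis
        proof (cases "\<bar>x\<bar> \<le> a + s")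
          case True
          then show ?thesis using N[OF mn True] by (simp add: eq)
        next
          case False
          then show ?thesis using Top_G_zero[of a x] e by simp
        qed
      qed
    qed
  qed
qed


lemma Top_int_bd:
  assumes u: "u \<in> borel_measurable borel" and C: "\<And>y. \<bar>u y\<bar> \<le> C"
  shows "integrable lborel (\<lambda>y. u y * t x y)"
proof -
  have i: "integrable lborel (\<lambda>y. C * t x y)" using t_int[of x] by simp
  have nb: "norm (u y * t x y) \<le> norm (C * t x y)" for y
  proof -
    have C0: "C \<ge> 0" using C[of y] by linarith
    have "\<bar>u y\<bar> * t x y \<le> C * t x y" using C[of y] t_nonneg[of x y] by (intro mult_right_mono) auto
    then show ?thesis using C0 t_nonneg[of x y] by (simp add: abs_mult)
  qed
  show ?thesis
    by (rule Bochner_Integration.integrable_bound[OF i]) (use u t_meas nb in \<open>auto simp: lb_meas\<close>)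
qed

lemma Top_sup:
  assumes u: "u \<in> borel_measurable borel" and C: "\<And>y. \<bar>u y\<bar> \<le> C"
  shows "\<bar>Top \<pi> q u x\<bar> \<le> C"
proof -
  have C0: "C \<ge> 0" using C[of 0] by linarith
  have "\<bar>Top \<pi> q u x\<bar> \<le> (\<integral>y. \<bar>u y * t x y\<bar> \<partial>lborel)"
    unfolding Top_def using integral_abs_bound by simp
  also have "\<dots> \<le> (\<integral>y. C * t x y \<partial>lborel)"
  proof (intro integral_mono integrable_abs Top_int_bd[OF u C])
    show "integrable lborel (\<lambda>y. C * t x y)" using t_int[of x] by simp
    show "\<bar>u y * t x y\<bar> \<le> C * t x y" for y
      using C[of y] t_nonneg[of x y] by (simp add: abs_mult mult_right_mono)
  qed
  also have "\<dots> = C * (\<integral>y. t x y \<partial>lborel)" by simp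
  also have "\<dots> \<le> C * 1" using t_intle[of x] C0 by (intro mult_left_mono) auto
  finally show ?thesis by simp
qed

lemma Top_lin:
  assumes u: "u \<in> borel_measurable borel" "\<And>y. \<bar>u y\<bar> \<le> C"
    and v: "v \<in> borel_measurable borel" "\<And>y. \<bar>v y\<bar> \<le> D"
  shows "Top \<pi> q (\<lambda>y. u y - v y) x = Top \<pi> q u x - Top \<pi> q v x"
proof -
  have "(\<lambda>y. (u y - v y) * t x y) = (\<lambda>y. u y * t x y - v y * t x y)"
    by (simp add: left_diff_distrib)
  then show ?thesis unfolding Top_def
    using Top_int_bd[OF u, of x] Top_int_bd[OF v, of x] by simp
qed

definition "Vop a = (\<lambda>f x. restr_out a (Rop \<pi> q) f x + restr_out a (Top \<pi> q) f x)"

lemma Vop_eq: "Vop a u x = indicator (UNIV - {-a..a}) x * (rfun \<pi> q x * u x) + indicator (UNIV - {-a..a}) x * Top \<pi> q u x"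
  unfolding Vop_def restr_out_def Rop_def by simp

lemma indo_le: "\<bar>indicator (UNIV - {-a..a}) x :: real\<bar> \<le> 1" by (simp add: indicator_def)

lemma V_BM: assumes "BMf u" shows "BMf (Vop a u)"
proof -
  obtain C where u: "u \<in> borel_measurable borel" and C: "\<And>x. \<bar>u x\<bar> \<le> C"
    using assms unfolding BMf_def by blast
  have C0: "C \<ge> 0" using C[of 0] by linarith
  have "\<bar>Vop a u x\<bar> \<le> C + C" for x
  proof -
    have "\<bar>indicator (UNIV - {-a..a}) x * (rfun \<pi> q x * u x)\<bar> \<le> 1 * (1 * C)"
      unfolding abs_mult using indo_le r_le[of x] r_ge[of x] C[of x] C0
      by (intro mult_mono) auto
    moreover have "\<bar>indicator (UNIV - {-a..a}) x * Top \<pi> q u x\<bar> \<le> 1 * C"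
      unfolding abs_mult using indo_le Top_sup[OF u C, of x] C0
      by (intro mult_mono) auto
    ultimately show ?thesis unfolding Vop_eq by linarith
  qed
  moreover have "Vop a u \<in> borel_measurable borel"
  proof -
    have "(\<lambda>x. indicator (UNIV - {-a..a}) x * (rfun \<pi> q x * u x) + indicator (UNIV - {-a..a}) x * Top \<pi> q u x) \<in> borel_measurable borel"
      by (intro borel_measurable_add borel_measurable_times ind_meas r_meas u Top_meas) simp_all
    then show ?thesis by (simp add: Vop_eq[abs_def])
  qed
  ultimately show ?thesis unfolding BMf_def by blast
qed

lemma V_lip:
  assumes "BMf u" "BMf v" "\<And>x. \<bar>u x - v x\<bar> \<le> e"
  shows "\<bar>Vop a u x - Vop a v x\<bar> \<le> 2 * e"
proof -
  obtain C where u: "u \<in> borel_measurable borel" and C: "\<And>x. \<bar>u x\<bar> \<le> C"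
    using assms unfolding BMf_def by blast
  obtain D where v: "v \<in> borel_measurable borel" and D: "\<And>x. \<bar>v x\<bar> \<le> D"
    using assms unfolding BMf_def by blast
  have e0: "e \<ge> 0" using assms(3)[of 0] by linarith
  have w: "(\<lambda>y. u y - v y) \<in> borel_measurable borel" using u v by (rule borel_measurable_diff)
  have "Vop a u x - Vop a v x = indicator (UNIV - {-a..a}) x * (rfun \<pi> q x * (u x - v x))
     + indicator (UNIV - {-a..a}) x * Top \<pi> q (\<lambda>y. u y - v y) x"
    unfolding Vop_eq Top_lin[OF u C v D] by (simp add: algebra_simps)
  moreover have "\<bar>indicator (UNIV - {-a..a}) x * (rfun \<pi> q x * (u x - v x))\<bar> \<le> 1 * (1 * e)"
    unfolding abs_mult using indo_le r_le[of x] r_ge[of x] assms(3)[of x] e0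
    by (intro mult_mono) auto
  moreover have "\<bar>indicator (UNIV - {-a..a}) x * Top \<pi> q (\<lambda>y. u y - v y) x\<bar> \<le> 1 * e"
    unfolding abs_mult using indo_le Top_sup[OF w assms(3), of x] e0
    by (intro mult_mono) auto
  ultimately show ?thesis by linarith
qed

lemma Vn_BM: "BMf u \<Longrightarrow> BMf ((Vop a ^^ n) u)"
  by (induction n) (auto intro: V_BM)

lemma Vn_lip:
  assumes "BMf u" "BMf v" "\<And>x. \<bar>u x - v x\<bar> \<le> e"
  shows "\<bar>(Vop a ^^ n) u x - (Vop a ^^ n) v x\<bar> \<le> 2 ^ n * e"
proof (induction n arbitrary: x)
  case 0
  then show ?case using assms(3) by simp
next
  case (Suc n)
  have "\<bar>Vop a ((Vop a ^^ n) u) x - Vop a ((Vop a ^^ n) v) x\<bar> \<le> 2 * (2 ^ n * e)"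
    by (rule V_lip[OF Vn_BM[OF assms(1)] Vn_BM[OF assms(2)] Suc.IH])
  then show ?case by simp
qed


lemma V_G: "Vop a (G a f) = (restr_out a (Top \<pi> q) \<circ> restr_in a (Rop \<pi> q)) f"
proof
  fix x
  show "Vop a (G a f) x = (restr_out a (Top \<pi> q) \<circ> restr_in a (Rop \<pi> q)) f x"
  proof (cases "\<bar>x\<bar> \<le> a")
    case True
    then show ?thesis unfolding Vop_eq part2_eq by (simp add: indo0)
  next
    case False
    then show ?thesis unfolding Vop_eq part2_eq by (simp add: G_def restr_in_def ind0)
  qed
qed

lemma part3:
  assumes a: "a > 0" and n: "n \<ge> 1"
  shows "compact_op \<pi> (((\<lambda>f x. restr_out a (Rop \<pi> q) f x + restr_out a (Top \<pi> q) f x) ^^ n)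
                        \<circ> restr_in a (Rop \<pi> q))"
proof -
  obtain k where nk: "n = Suc k" using n by (cases n) auto
  have VV: "(\<lambda>f x. restr_out a (Rop \<pi> q) f x + restr_out a (Top \<pi> q) f x) = Vop a"
    using Vop_def[of a] by simp
  define U2 where "U2 = restr_out a (Top \<pi> q) \<circ> restr_in a (Rop \<pi> q)"
  have eq: "((Vop a ^^ n) \<circ> restr_in a (Rop \<pi> q)) = (\<lambda>f. (Vop a ^^ k) (U2 f))"
  proof
    fix f
    have "restr_in a (Rop \<pi> q) f = G a f" by (simp add: G_def)
    then show "((Vop a ^^ n) \<circ> restr_in a (Rop \<pi> q)) f = (Vop a ^^ k) (U2 f)"
      unfolding nk funpow_Suc_right U2_def using V_G[of a f] by simp
  qed
  show ?thesis unfolding VV eq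
  proof (rule compact_from_sup)
    fix f assume "L2 \<pi> f"
    then have "BMf (U2 f)" unfolding U2_def using part2_BM a by blast
    then show "BMf ((Vop a ^^ k) (U2 f))" by (rule Vn_BM)
  next
    show "SCp (\<lambda>f. (Vop a ^^ k) (U2 f))"
      unfolding SCp_def
    proof (intro allI impI)
      fix fs :: "nat \<Rightarrow> real \<Rightarrow> real" and B assume h: "(\<forall>n. L2 \<pi> (fs n)) \<and> (\<forall>n. Nf (fs n) \<le> B)"
      from part2_SC[OF a, unfolded SCp_def, rule_format, OF h, folded U2_def]
      obtain r where r: "strict_mono (r::nat\<Rightarrow>nat)" and c: "\<forall>e>0. \<exists>N. \<forall>m\<ge>N. \<forall>n\<ge>N. \<forall>x.
          \<bar>U2 (fs (r m)) x - U2 (fs (r n)) x\<bar> < e" by blast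
      have BM: "\<And>n. BMf (U2 (fs n))" unfolding U2_def using part2_BM a h by blast
      show "\<exists>r. strict_mono (r::nat\<Rightarrow>nat) \<and> (\<forall>e>0. \<exists>N. \<forall>m\<ge>N. \<forall>n\<ge>N. \<forall>x.
          \<bar>(Vop a ^^ k) (U2 (fs (r m))) x - (Vop a ^^ k) (U2 (fs (r n))) x\<bar> < e)"
      proof (intro exI[of _ r] conjI r allI impI)
        fix e :: real assume e: "e > 0"
        then have e': "e / (2 * 2 ^ k) > 0" by simp
        from c[rule_format, OF e'] obtain N where N: "\<And>m n x. m \<ge> N \<Longrightarrow> n \<ge> N \<Longrightarrow>
            \<bar>U2 (fs (r m)) x - U2 (fs (r n)) x\<bar> < e / (2 * 2 ^ k)" by blast
        show "\<exists>N. \<forall>m\<ge>N. \<forall>n\<ge>N. \<forall>x.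
          \<bar>(Vop a ^^ k) (U2 (fs (r m))) x - (Vop a ^^ k) (U2 (fs (r n))) x\<bar> < e"
        proof (intro exI[of _ N] allI impI)
          fix m n x assume mn: "N \<le> m" "N \<le> n"
          have "\<bar>(Vop a ^^ k) (U2 (fs (r m))) x - (Vop a ^^ k) (U2 (fs (r n))) x\<bar> \<le> 2 ^ k * (e / (2 * 2 ^ k))"
            by (rule Vn_lip[OF BM BM]) (use N[OF mn] in \<open>simp add: less_imp_le\<close>)
          also have "\<dots> = e / 2" by simp
          also have "\<dots> < e" using e by simp
          finally show "\<bar>(Vop a ^^ k) (U2 (fs (r m))) x - (Vop a ^^ k) (U2 (fs (r n))) x\<bar> < e" .
        qed
      qed
    qed
  qed
qed

end

theorem lemma3p1:
  fixes \<pi> :: "real \<Rightarrow> real" and q :: "real \<Rightarrow> real \<Rightarrow> real" and a s :: real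
  assumes pi_pos: "\<And>x. \<pi> x > 0"
    and pi_cont: "continuous_on UNIV \<pi>"
    and pi_int: "integrable lborel \<pi>"
    and pi_one: "(\<integral>y. \<pi> y \<partial>lborel) = 1"
    and q_nonneg: "\<And>x y. q x y \<ge> 0"
    and q_bdd: "\<exists>B. \<forall>x y. q x y \<le> B"
    and q_cont: "continuous_on UNIV (\<lambda>(x, y). q x y)"
    and q_int: "\<And>x. integrable lborel (q x)"
    and q_one: "\<And>x. (\<integral>y. q x y \<partial>lborel) = 1"
    and s_pos: "s > 0"
    and q_supp: "\<And>x u. \<bar>u\<bar> > s \<Longrightarrow> q x (x + u) = 0"
    and a_pos: "a > 0"
  shows "compact_op \<pi> (restr_in a (Top \<pi> q))
    \<and> compact_op \<pi> (restr_out a (Top \<pi> q) \<circ> restr_in a (Rop \<pi> q))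
    \<and> (\<forall>n::nat. n \<ge> 1 \<longrightarrow>
         compact_op \<pi> (((\<lambda>f x. restr_out a (Rop \<pi> q) f x + restr_out a (Top \<pi> q) f x) ^^ n)
                        \<circ> restr_in a (Rop \<pi> q)))"
proof -
  obtain Q where Q: "\<And>x y. q x y \<le> Q" using q_bdd by blast
  interpret P: pisetup \<pi> q s Q
    by unfold_locales (use assms Q in auto)
  show ?thesis
    using P.compact_from_sup[OF P.part1_BM P.part1_SC] P.compact_from_sup[OF P.part2_BM P.part2_SC]
      P.part3 a_pos by blast
qed

end
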